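(* Let $R=K[x_1,\ldots,x_n]$ be a polynomial ring over a field $K$, let $I\subset R$ be a monomial ideal, $t$ a positive integer, $\mathfrak{p}$ a monomial prime ideal of $R$, and $y_1,\ldots,y_s$ distinct variables of $R$ such that for each $i=1,\ldots,s$ we have $\mathfrak{p}\setminus y_i\notin \mathrm{Ass}(R/(I\setminus y_i)^t)$. Then $\mathfrak{p}\in\mathrm{Ass}(R/I^t)$ if and only if $\mathfrak{p}\in\mathrm{Ass}\big(R/(I^t:\prod_{i=1}^s y_i)\big)$.
   Context: For a monomial ideal $I\subset R$, $\mathcal{G}(I)$ denotes its unique minimal set of monomial generators. For a variable $x_i$, the deletion $I\setminus x_i$ is the monomial ideal of $R$ generated by those $u\in\mathcal{G}(I)$ with $x_i\nmid u$ (equivalently, obtained by setting $x_i=0$ in every minimal generator). In particular, for a monomial prime ideal $\mathfrak{p}$ (generated by a set of variables), $\mathfrak{p}\setminus x_i$ is the ideal generated by the variables of $\mathfrak{p}$ other than $x_i$. $\mathrm{Ass}(R/J)$ is the set of associated primes of $R/J$. *)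

theory Defs
  imports "HOL-Library.Poly_Mapping"
begin

text \<open>The polynomial ring R = K[x_i : i in 'n] is modelled as
  finitely supported maps from exponent vectors (n =>0 nat) to coefficients in k,
  with convolution multiplication (library instance comm_ring_1).\<close>

type_synonym ('n, 'k) mpoly = "('n \<Rightarrow>\<^sub>0 nat) \<Rightarrow>\<^sub>0 'k"

definition mon :: "('n \<Rightarrow>\<^sub>0 nat) \<Rightarrow> ('n, 'k::field) mpoly" where
  "mon a = Poly_Mapping.single a 1"

definition var :: "'n \<Rightarrow> ('n, 'k::field) mpoly" where
  "var i = mon (Poly_Mapping.single i 1)"

definition is_ideal :: "('n, 'k::field) mpoly set \<Rightarrow> bool" where
  "is_ideal J \<longleftrightarrow> 0 \<in> J \<and> (\<forall>f\<in>J. \<forall>g\<in>J. f + g \<in> J) \<and> (\<forall>f\<in>J. \<forall>r. r * f \<in> J)"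

definition ideal_gen :: "('n, 'k::field) mpoly set \<Rightarrow> ('n, 'k) mpoly set" where
  "ideal_gen S = \<Inter>{J. is_ideal J \<and> S \<subseteq> J}"

definition prime_ideal :: "('n, 'k::field) mpoly set \<Rightarrow> bool" where
  "prime_ideal P \<longleftrightarrow> is_ideal P \<and> P \<noteq> UNIV \<and> (\<forall>a b. a * b \<in> P \<longrightarrow> a \<in> P \<or> b \<in> P)"

definition monomial_ideal :: "('n, 'k::field) mpoly set \<Rightarrow> bool" where
  "monomial_ideal I \<longleftrightarrow> (\<exists>S. I = ideal_gen (mon ` S))"

definition ideal_pow :: "('n, 'k::field) mpoly set \<Rightarrow> nat \<Rightarrow> ('n, 'k) mpoly set" where
  "ideal_pow J t = ideal_gen {(\<Prod>i<t. f i) | f. \<forall>i<t. f i \<in> J}"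

definition colon :: "('n, 'k::field) mpoly set \<Rightarrow> ('n, 'k) mpoly \<Rightarrow> ('n, 'k) mpoly set" where
  "colon J f = {g. g * f \<in> J}"

text \<open>Ass(R/J): prime ideals of the form (J : f) = Ann(f + J).\<close>
definition Ass :: "('n, 'k::field) mpoly set \<Rightarrow> ('n, 'k) mpoly set set" where
  "Ass J = {P. prime_ideal P \<and> (\<exists>f. P = colon J f)}"

definition mdvd :: "('n \<Rightarrow>\<^sub>0 nat) \<Rightarrow> ('n \<Rightarrow>\<^sub>0 nat) \<Rightarrow> bool" where
  "mdvd b a \<longleftrightarrow> (\<forall>i. Poly_Mapping.lookup b i \<le> Poly_Mapping.lookup a i)"

definition mingens :: "('n, 'k::field) mpoly set \<Rightarrow> ('n \<Rightarrow>\<^sub>0 nat) set" where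
  "mingens I = {a. (mon a :: ('n,'k) mpoly) \<in> I \<and>
      (\<forall>b. (mon b :: ('n,'k) mpoly) \<in> I \<and> mdvd b a \<longrightarrow> b = a)}"

definition deletion :: "('n, 'k::field) mpoly set \<Rightarrow> 'n \<Rightarrow> ('n, 'k) mpoly set" where
  "deletion I x = ideal_gen (mon ` {a \<in> mingens I. Poly_Mapping.lookup a x = 0})"

end

theory Submission
  imports Defs
begin

lemma ideal_gen_is_ideal: "is_ideal (ideal_gen S)"
  unfolding ideal_gen_def is_ideal_def by auto

lemma ideal_gen_sub: "S \<subseteq> ideal_gen S"
  unfolding ideal_gen_def by auto

lemma ideal_gen_least: "is_ideal J \<Longrightarrow> S \<subseteq> J \<Longrightarrow> ideal_gen S \<subseteq> J"
  unfolding ideal_gen_def by auto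

lemma ideal_sum: "is_ideal J \<Longrightarrow> (\<And>a. a \<in> X \<Longrightarrow> f a \<in> J) \<Longrightarrow> sum f X \<in> J"
proof (induction X rule: infinite_finite_induct)
  case (infinite A) then show ?case by (simp add: is_ideal_def)
next
  case empty then show ?case by (simp add: is_ideal_def)
next
  case (insert x F) then show ?case by (simp add: is_ideal_def)
qed

lemma ideal_multl: "is_ideal J \<Longrightarrow> f \<in> J \<Longrightarrow> r * f \<in> J"
  by (simp add: is_ideal_def)

lemma ideal_add: "is_ideal J \<Longrightarrow> f \<in> J \<Longrightarrow> g \<in> J \<Longrightarrow> f + g \<in> J"
  by (simp add: is_ideal_def)

lemma ideal_multr: "is_ideal J \<Longrightarrow> f \<in> J \<Longrightarrow> f * r \<in> J"
  by (metis ideal_multl mult.commute)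

lemma pm_repr: "(f::'a \<Rightarrow>\<^sub>0 'b::comm_monoid_add) = (\<Sum>a\<in>Poly_Mapping.keys f. Poly_Mapping.single a (Poly_Mapping.lookup f a))"
proof (rule poly_mapping_eqI)
  fix k
  have "Poly_Mapping.lookup (\<Sum>a\<in>Poly_Mapping.keys f. Poly_Mapping.single a (Poly_Mapping.lookup f a)) k
     = (\<Sum>a\<in>Poly_Mapping.keys f. (if a = k then Poly_Mapping.lookup f a else 0))"
    by (simp add: lookup_sum lookup_single when_def)
  also have "\<dots> = Poly_Mapping.lookup f k"
    by (simp add: in_keys_iff)
  finally show "Poly_Mapping.lookup f k = Poly_Mapping.lookup (\<Sum>a\<in>Poly_Mapping.keys f. Poly_Mapping.single a (Poly_Mapping.lookup f a)) k" by simp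
qed

lemma mon_add: "(mon (a + b) :: ('n,'k::field) mpoly) = mon a * mon b"
  by (simp add: mon_def mult_single)

lemma mon_zero: "(mon 0 :: ('n,'k::field) mpoly) = 1"
  by (simp add: mon_def)

lemma keys_mon[simp]: "Poly_Mapping.keys (mon a :: ('n,'k::field) mpoly) = {a}"
  by (simp add: mon_def)

lemma single_mon: "(Poly_Mapping.single a c :: ('n,'k::field) mpoly) = Poly_Mapping.single 0 c * mon a"
  by (simp add: mon_def mult_single)

lemma ideal_from_mons:
  fixes f :: "('n,'k::field) mpoly"
  assumes "is_ideal J" "\<And>a. a \<in> Poly_Mapping.keys f \<Longrightarrow> mon a \<in> J"
  shows "f \<in> J"
proof -
  have "f = (\<Sum>a\<in>Poly_Mapping.keys f. Poly_Mapping.single 0 (Poly_Mapping.lookup f a) * mon a)"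
  proof -
    have "f = (\<Sum>a\<in>Poly_Mapping.keys f. Poly_Mapping.single a (Poly_Mapping.lookup f a))" by (rule pm_repr)
    also have "\<dots> = (\<Sum>a\<in>Poly_Mapping.keys f. Poly_Mapping.single 0 (Poly_Mapping.lookup f a) * mon a)"
      by (rule sum.cong[OF refl], rule single_mon)
    finally show ?thesis .
  qed
  also have "\<dots> \<in> J" using assms by (intro ideal_sum ideal_multl) auto
  finally show ?thesis .
qed

definition PI :: "('n \<Rightarrow>\<^sub>0 nat) set \<Rightarrow> ('n, 'k::field) mpoly set" where
  "PI X = {f. Poly_Mapping.keys f \<subseteq> X}"

definition up :: "('n \<Rightarrow>\<^sub>0 nat) set \<Rightarrow> ('n \<Rightarrow>\<^sub>0 nat) set" where
  "up X = {a. \<exists>s\<in>X. mdvd s a}"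

definition upclosed :: "('n \<Rightarrow>\<^sub>0 nat) set \<Rightarrow> bool" where
  "upclosed X \<longleftrightarrow> (\<forall>a b. a \<in> X \<longrightarrow> mdvd a b \<longrightarrow> b \<in> X)"

lemma mdvd_refl[simp]: "mdvd a a" by (simp add: mdvd_def)
lemma mdvd_trans: "mdvd a b \<Longrightarrow> mdvd b c \<Longrightarrow> mdvd a c"
  unfolding mdvd_def using le_trans by blast
lemma mdvd_add[simp]: "mdvd a (a + b)" by (simp add: mdvd_def lookup_add)
lemma mdvd_add2[simp]: "mdvd b (a + b)" by (simp add: mdvd_def lookup_add)
lemma mdvd_ex: "mdvd b a \<Longrightarrow> a = b + (a - b)"
  by (rule poly_mapping_eqI) (simp add: mdvd_def lookup_add lookup_minus)
lemma mdvd_antisym: "mdvd a b \<Longrightarrow> mdvd b a \<Longrightarrow> a = b"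
  by (rule poly_mapping_eqI) (simp add: mdvd_def order_antisym)

lemma upclosed_up: "upclosed (up X)"
  unfolding upclosed_def up_def using mdvd_trans by blast

lemma sub_up: "X \<subseteq> up X"
  unfolding up_def using mdvd_refl by blast

lemma up_upclosed: "upclosed X \<Longrightarrow> up X = X"
  apply (auto simp: upclosed_def up_def) using mdvd_refl by blast

lemma PI_ideal: "upclosed X \<Longrightarrow> is_ideal (PI X)"
proof -
  assume u: "upclosed X"
  have "Poly_Mapping.keys (r * f) \<subseteq> X" if "Poly_Mapping.keys f \<subseteq> X" for r f :: "('a,'b) mpoly"
  proof
    fix k assume "k \<in> Poly_Mapping.keys (r * f)"
    then obtain a b where "k = a + b" "b \<in> Poly_Mapping.keys f" using keys_mult by blast
    then show "k \<in> X" using u that unfolding upclosed_def by (metis mdvd_add2 subsetD)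
  qed
  then have m: "r * f \<in> PI X" if "f \<in> PI X" for r f :: "('a,'b) mpoly" using that by (simp add: PI_def)
  have z: "(0::('a,'b) mpoly) \<in> PI X" by (simp add: PI_def)
  have a: "f + g \<in> PI X" if "f \<in> PI X" "g \<in> PI X" for f g :: "('a,'b) mpoly"
    using that keys_add[of f g] by (auto simp: PI_def)
  show ?thesis unfolding is_ideal_def using z a m by blast
qed

lemma mon_in_PI[simp]: "(mon a :: ('n,'k::field) mpoly) \<in> PI X \<longleftrightarrow> a \<in> X"
  by (simp add: PI_def)

lemma PI_inj: "(PI X :: ('n,'k::field) mpoly set) = PI Y \<Longrightarrow> X = Y"
  by (metis mon_in_PI subsetI subset_antisym)

lemma ideal_gen_mon: "(ideal_gen (mon ` S) :: ('n,'k::field) mpoly set) = PI (up S)"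
proof
  show "ideal_gen (mon ` S) \<subseteq> (PI (up S) :: ('n,'k::field) mpoly set)"
    by (rule ideal_gen_least) (auto intro: PI_ideal upclosed_up sub_up[THEN subsetD])
next
  show "(PI (up S) :: ('n,'k::field) mpoly set) \<subseteq> ideal_gen (mon ` S)"
  proof
    fix f :: "('n,'k) mpoly" assume "f \<in> PI (up S)"
    show "f \<in> ideal_gen (mon ` S)"
    proof (rule ideal_from_mons[OF ideal_gen_is_ideal])
      fix a assume "a \<in> Poly_Mapping.keys f"
      then obtain s where s: "s \<in> S" "mdvd s a" using \<open>f \<in> PI (up S)\<close> unfolding PI_def up_def by auto
      have "mon a = mon (a - s) * (mon s :: ('n,'k) mpoly)"
        by (subst mdvd_ex[OF s(2)]) (simp add: mon_add mult.commute)
      moreover have "(mon s :: ('n,'k) mpoly) \<in> ideal_gen (mon ` S)" using s ideal_gen_sub by blast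
      moreover have "mon (a - s) * (mon s :: ('n,'k) mpoly) \<in> ideal_gen (mon ` S)"
        by (rule ideal_multl[OF ideal_gen_is_ideal]) fact
      ultimately show "(mon a :: ('n,'k) mpoly) \<in> ideal_gen (mon ` S)" by metis
    qed
  qed
qed


lemma kappa_ex: "\<exists>\<kappa> :: ('n::finite \<Rightarrow>\<^sub>0 nat) \<Rightarrow> (nat \<Rightarrow>\<^sub>0 nat). inj \<kappa> \<and> (\<forall>a b. \<kappa> (a + b) = \<kappa> a + \<kappa> b)"
proof -
  obtain e :: "'n \<Rightarrow> nat" and n where e: "inj_on e UNIV"
    using finite_imp_inj_to_nat_seg[OF finite_UNIV] by blast
  define \<kappa> where "\<kappa> a = (\<Sum>x\<in>UNIV. Poly_Mapping.single (e x) (Poly_Mapping.lookup a x))" for a :: "'n \<Rightarrow>\<^sub>0 nat"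
  have lk: "Poly_Mapping.lookup (\<kappa> a) (e x) = Poly_Mapping.lookup a x" for a x
  proof -
    have "Poly_Mapping.lookup (\<kappa> a) (e x) = (\<Sum>z\<in>UNIV. if z = x then Poly_Mapping.lookup a z else 0)"
      unfolding \<kappa>_def lookup_sum lookup_single when_def
      by (rule sum.cong) (auto dest: injD[OF e])
    then show ?thesis by simp
  qed
  have "inj \<kappa>"
  proof (rule injI)
    fix a b assume "\<kappa> a = \<kappa> b"
    then show "a = b" by (metis lk poly_mapping_eqI)
  qed
  moreover have "\<kappa> (a + b) = \<kappa> a + \<kappa> b" for a b
    unfolding \<kappa>_def by (simp add: lookup_add single_add sum.distrib)
  ultimately show ?thesis by blast
qed

lemma mult_expand:
  fixes f g :: "('n,'k::field) mpoly"
  shows "f * g = (\<Sum>a\<in>Poly_Mapping.keys f. \<Sum>b\<in>Poly_Mapping.keys g.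
            Poly_Mapping.single (a + b) (Poly_Mapping.lookup f a * Poly_Mapping.lookup g b))"
proof -
  have "f * g = (\<Sum>a\<in>Poly_Mapping.keys f. Poly_Mapping.single a (Poly_Mapping.lookup f a)) *
                (\<Sum>b\<in>Poly_Mapping.keys g. Poly_Mapping.single b (Poly_Mapping.lookup g b))"
    using pm_repr[of f] pm_repr[of g] by (rule arg_cong2)
  also have "\<dots> = (\<Sum>a\<in>Poly_Mapping.keys f. \<Sum>b\<in>Poly_Mapping.keys g.
            Poly_Mapping.single (a + b) (Poly_Mapping.lookup f a * Poly_Mapping.lookup g b))"
    by (simp add: sum_product mult_single)
  finally show ?thesis .
qed

lemma mpoly_nzd:
  fixes f g :: "('n::finite,'k::field) mpoly"
  assumes "f \<noteq> 0" "g \<noteq> 0"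
  shows "f * g \<noteq> 0"
proof -
  obtain \<kappa> :: "('n \<Rightarrow>\<^sub>0 nat) \<Rightarrow> (nat \<Rightarrow>\<^sub>0 nat)" where ki: "inj \<kappa>" and ka: "\<And>a b. \<kappa> (a + b) = \<kappa> a + \<kappa> b"
    using kappa_ex by blast
  define F where "F = Poly_Mapping.keys f"
  define G where "G = Poly_Mapping.keys g"
  have F: "finite F" "F \<noteq> {}" using assms by (auto simp: F_def)
  have G: "finite G" "G \<noteq> {}" using assms by (auto simp: G_def)
  have "Max (\<kappa> ` F) \<in> \<kappa> ` F" using F by simp
  then obtain a0 where a0: "a0 \<in> F" "\<kappa> a0 = Max (\<kappa> ` F)" by (metis imageE)
  have "Max (\<kappa> ` G) \<in> \<kappa> ` G" using G by simp
  then obtain b0 where b0: "b0 \<in> G" "\<kappa> b0 = Max (\<kappa> ` G)" by (metis imageE)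
  have aM: "\<kappa> a \<le> \<kappa> a0" if "a \<in> F" for a using a0 F that by simp
  have bM: "\<kappa> b \<le> \<kappa> b0" if "b \<in> G" for b using b0 G that by simp
  have key: "a = a0 \<and> b = b0" if "a \<in> F" "b \<in> G" "a + b = a0 + b0" for a b
  proof -
    have eq: "\<kappa> a + \<kappa> b = \<kappa> a0 + \<kappa> b0" using that(3) ka by metis
    have "\<kappa> a = \<kappa> a0"
    proof (rule ccontr)
      assume "\<kappa> a \<noteq> \<kappa> a0"
      then have "\<kappa> a < \<kappa> a0" using aM[OF that(1)] by simp
      then have "\<kappa> a + \<kappa> b < \<kappa> a0 + \<kappa> b0" using bM[OF that(2)] by (rule add_less_le_mono)
      then show False using eq by simp
    qed
    then have "a = a0" using ki by (simp add: inj_eq)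
    then show ?thesis using that(3) by simp
  qed
  have "Poly_Mapping.lookup (f * g) (a0 + b0) =
     (\<Sum>a\<in>F. \<Sum>b\<in>G. if a + b = a0 + b0 then Poly_Mapping.lookup f a * Poly_Mapping.lookup g b else 0)"
    unfolding mult_expand F_def G_def by (simp add: lookup_sum lookup_single when_def)
  also have "\<dots> = (\<Sum>a\<in>F. if a = a0 then Poly_Mapping.lookup f a0 * Poly_Mapping.lookup g b0 else 0)"
  proof (rule sum.cong[OF refl])
    fix a assume aF: "a \<in> F"
    show "(\<Sum>b\<in>G. if a + b = a0 + b0 then Poly_Mapping.lookup f a * Poly_Mapping.lookup g b else 0) =
          (if a = a0 then Poly_Mapping.lookup f a0 * Poly_Mapping.lookup g b0 else 0)"
    proof (cases "a = a0")
      case True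
      have "(\<Sum>b\<in>G. if a + b = a0 + b0 then Poly_Mapping.lookup f a * Poly_Mapping.lookup g b else 0) =
            (\<Sum>b\<in>G. if b = b0 then Poly_Mapping.lookup f a0 * Poly_Mapping.lookup g b else 0)"
        using True by (intro sum.cong refl) auto
      also have "\<dots> = Poly_Mapping.lookup f a0 * Poly_Mapping.lookup g b0"
        using G b0 by simp
      finally show ?thesis using True by simp
    next
      case False
      have "\<forall>b\<in>G. (if a + b = a0 + b0 then Poly_Mapping.lookup f a * Poly_Mapping.lookup g b else 0) = 0"
        using False key[OF aF] by auto
      then show ?thesis using False by (simp add: sum.neutral)
    qed
  qed
  also have "\<dots> = Poly_Mapping.lookup f a0 * Poly_Mapping.lookup g b0"
    using F a0 by simp
  also have "\<dots> \<noteq> 0" using a0 b0 by (simp add: F_def G_def in_keys_iff)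
  finally show ?thesis by auto
qed

definition W :: "'n set \<Rightarrow> ('n \<Rightarrow>\<^sub>0 nat) set" where
  "W B = {a. \<exists>x\<in>B. 0 < Poly_Mapping.lookup a x}"

lemma upclosed_W: "upclosed (W B)"
  unfolding upclosed_def
proof (intro allI impI)
  fix a b assume "a \<in> W B" "mdvd a b"
  then obtain x where "x \<in> B" "0 < Poly_Mapping.lookup a x" "Poly_Mapping.lookup a x \<le> Poly_Mapping.lookup b x"
    unfolding W_def mdvd_def by blast
  then show "b \<in> W B" unfolding W_def using less_le_trans by blast
qed

lemma notW_add: "a \<notin> W B \<Longrightarrow> b \<notin> W B \<Longrightarrow> a + b \<notin> W B"
  by (simp add: W_def lookup_add)

lemma split_W:
  fixes f :: "('n,'k::field) mpoly"
  shows "\<exists>f' f''. f = f' + f'' \<and> f'' \<in> PI (W B) \<and> Poly_Mapping.keys f' \<inter> W B = {}"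
proof -
  let ?s = "\<lambda>a. Poly_Mapping.single a (Poly_Mapping.lookup f a)"
  define f' where "f' = (\<Sum>a\<in>Poly_Mapping.keys f - W B. ?s a)"
  define f'' where "f'' = (\<Sum>a\<in>Poly_Mapping.keys f \<inter> W B. ?s a)"
  have "f = (\<Sum>a\<in>Poly_Mapping.keys f. ?s a)" by (rule pm_repr)
  also have "\<dots> = f'' + f'" unfolding f'_def f''_def by (rule sum.Int_Diff) simp
  finally have "f = f'' + f'" .
  moreover have "Poly_Mapping.keys f'' \<subseteq> W B" unfolding f''_def
    using keys_sum[of ?s "Poly_Mapping.keys f \<inter> W B"] by auto
  moreover have "Poly_Mapping.keys f' \<subseteq> - W B" unfolding f'_def
    using keys_sum[of ?s "Poly_Mapping.keys f - W B"] by auto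
  ultimately show ?thesis unfolding PI_def by (metis add.commute disjoint_eq_subset_Compl inf.commute mem_Collect_eq)
qed

lemma prime_PI_W: "prime_ideal (PI (W B) :: ('n::finite,'k::field) mpoly set)"
proof -
  let ?P = "PI (W B) :: ('n,'k) mpoly set"
  have id: "is_ideal ?P" by (rule PI_ideal[OF upclosed_W])
  have "1 \<notin> ?P" using mon_in_PI[of 0 "W B"] by (simp add: mon_zero W_def)
  then have nu: "?P \<noteq> UNIV" by blast
  have "a \<in> ?P \<or> b \<in> ?P" if ab: "a * b \<in> ?P" for a b :: "('n,'k) mpoly"
  proof (rule ccontr)
    assume "\<not> (a \<in> ?P \<or> b \<in> ?P)"
    then have na: "a \<notin> ?P" and nb: "b \<notin> ?P" by auto
    obtain a' a'' where as: "a = a' + a''" "a'' \<in> ?P" "Poly_Mapping.keys a' \<inter> W B = {}" using split_W by blast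
    obtain b' b'' where bs: "b = b' + b''" "b'' \<in> ?P" "Poly_Mapping.keys b' \<inter> W B = {}" using split_W by blast
    have "a' \<noteq> 0" using na as by auto
    moreover have "b' \<noteq> 0" using nb bs by auto
    ultimately have nz: "a' * b' \<noteq> 0" by (rule mpoly_nzd)
    have "a' * b' = a * b + (-1) * (a' * b'' + a'' * b)"
      using as(1) bs(1) by (simp add: algebra_simps)
    also have "\<dots> \<in> ?P"
    proof -
      have m1: "a' * b'' \<in> ?P" by (rule ideal_multl[OF id bs(2)])
      have m2: "a'' * b \<in> ?P" by (rule ideal_multr[OF id as(2)])
      have "a' * b'' + a'' * b \<in> ?P" by (rule ideal_add[OF id m1 m2])
      then have "(-1) * (a' * b'' + a'' * b) \<in> ?P" by (rule ideal_multl[OF id])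
      then show ?thesis by (rule ideal_add[OF id ab])
    qed
    finally have "Poly_Mapping.keys (a' * b') \<subseteq> W B" by (simp add: PI_def)
    moreover have "Poly_Mapping.keys (a' * b') \<inter> W B = {}"
    proof (rule ccontr)
      assume "Poly_Mapping.keys (a' * b') \<inter> W B \<noteq> {}"
      then obtain k where k: "k \<in> Poly_Mapping.keys (a' * b')" "k \<in> W B" by blast
      then obtain c d where cd: "k = c + d" "c \<in> Poly_Mapping.keys a'" "d \<in> Poly_Mapping.keys b'"
        using keys_mult[of a' b'] by blast
      have "c \<notin> W B" "d \<notin> W B" using cd as(3) bs(3) by blast+
      then have "k \<notin> W B" using cd(1) notW_add by blast
      then show False using k by blast
    qed
    ultimately have "Poly_Mapping.keys (a' * b') = {}" by blast
    then show False using nz by simp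
  qed
  then show ?thesis using id nu unfolding prime_ideal_def by blast
qed

lemma keys_mult_mon:
  fixes g :: "('n,'k::field) mpoly"
  shows "Poly_Mapping.keys (g * mon m) = (\<lambda>a. a + m) ` Poly_Mapping.keys g"
proof -
  have e0: "g * mon m = (\<Sum>a\<in>Poly_Mapping.keys g. Poly_Mapping.single a (Poly_Mapping.lookup g a)) * mon m"
    using pm_repr[of g] by (rule arg_cong)
  have e: "g * mon m = (\<Sum>a\<in>Poly_Mapping.keys g. Poly_Mapping.single (a + m) (Poly_Mapping.lookup g a))"
    unfolding e0 by (simp add: sum_distrib_right mon_def mult_single)
  have l: "Poly_Mapping.lookup (g * mon m) (b + m) = Poly_Mapping.lookup g b" for b
  proof -
    have "Poly_Mapping.lookup (g * mon m) (b + m) = (\<Sum>a\<in>Poly_Mapping.keys g. if a = b then Poly_Mapping.lookup g a else 0)"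
      unfolding e lookup_sum lookup_single when_def by (rule sum.cong) auto
    then show ?thesis by (simp add: in_keys_iff)
  qed
  have "Poly_Mapping.keys (g * mon m) \<subseteq> (\<lambda>a. a + m) ` Poly_Mapping.keys g"
    unfolding e using keys_sum[of "\<lambda>a. Poly_Mapping.single (a + m) (Poly_Mapping.lookup g a)" "Poly_Mapping.keys g"]
    by (auto split: if_splits)
  moreover have "(\<lambda>a. a + m) ` Poly_Mapping.keys g \<subseteq> Poly_Mapping.keys (g * mon m)"
    using l by (auto simp: in_keys_iff)
  ultimately show ?thesis by blast
qed

lemma colon_mon: "colon (PI X) (mon m) = (PI {c. c + m \<in> X} :: ('n,'k::field) mpoly set)"
  unfolding colon_def PI_def by (auto simp: keys_mult_mon)

lemma colon_colon: "colon (colon J g) f = colon J (f * g)"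
  unfolding colon_def by (simp add: mult.assoc)


definition psum :: "('n \<Rightarrow>\<^sub>0 nat) set \<Rightarrow> nat \<Rightarrow> ('n \<Rightarrow>\<^sub>0 nat) set" where
  "psum X t = {(\<Sum>i<t. g i) | g. \<forall>i<t. g i \<in> X}"

definition upow :: "('n \<Rightarrow>\<^sub>0 nat) set \<Rightarrow> nat \<Rightarrow> ('n \<Rightarrow>\<^sub>0 nat) set" where
  "upow X t = up (psum X t)"

lemma keys_prod:
  fixes f :: "nat \<Rightarrow> ('n,'k::field) mpoly" and t :: nat
  assumes "a \<in> Poly_Mapping.keys (\<Prod>i<t. f i)"
  shows "\<exists>g. (\<forall>i<t. g i \<in> Poly_Mapping.keys (f i)) \<and> a = (\<Sum>i<t. g i)"
  using assms
proof (induction t arbitrary: a)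
  case 0 then show ?case by simp
next
  case (Suc t)
  then have "a \<in> Poly_Mapping.keys ((\<Prod>i<t. f i) * f t)" by simp
  then obtain b c where bc: "a = b + c" "b \<in> Poly_Mapping.keys (\<Prod>i<t. f i)" "c \<in> Poly_Mapping.keys (f t)"
    using keys_mult by blast
  obtain g where g: "\<forall>i<t. g i \<in> Poly_Mapping.keys (f i)" "b = (\<Sum>i<t. g i)" using Suc.IH bc(2) by blast
  define g' where "g' = g(t := c)"
  have "(\<Sum>i<t. g' i) = (\<Sum>i<t. g i)" unfolding g'_def by (intro sum.cong) auto
  then have "a = (\<Sum>i<Suc t. g' i)" using bc g by (simp add: g'_def)
  moreover have "\<forall>i<Suc t. g' i \<in> Poly_Mapping.keys (f i)" using g bc by (auto simp: g'_def less_Suc_eq)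
  ultimately show ?case by blast
qed

lemma mon_sum: "(mon (\<Sum>i<(t::nat). g i) :: ('n,'k::field) mpoly) = (\<Prod>i<t. mon (g i))"
  by (induction t) (simp_all add: mon_zero mon_add)

lemma pow_PI: "(ideal_pow (PI X) t :: ('n,'k::field) mpoly set) = PI (upow X t)"
proof
  show "(ideal_pow (PI X) t :: ('n,'k) mpoly set) \<subseteq> PI (upow X t)"
    unfolding ideal_pow_def
  proof (rule ideal_gen_least[OF PI_ideal[OF upclosed_up[of "psum X t"], folded upow_def]])
    show "{\<Prod>i<t. f i |f. \<forall>i<t. (f i :: ('n,'k) mpoly) \<in> PI X} \<subseteq> PI (upow X t)"
    proof (safe)
      fix f :: "nat \<Rightarrow> ('n,'k) mpoly" assume f: "\<forall>i<t. f i \<in> PI X"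
      show "(\<Prod>i<t. f i) \<in> PI (upow X t)" unfolding PI_def mem_Collect_eq
      proof (rule subsetI)
        fix a :: "'n \<Rightarrow>\<^sub>0 nat" assume "a \<in> Poly_Mapping.keys (\<Prod>i<t. f i)"
        then obtain g where "\<forall>i<t. g i \<in> Poly_Mapping.keys (f i)" "a = (\<Sum>i<t. g i)" using keys_prod by blast
        then have "a \<in> psum X t" using f unfolding psum_def PI_def by blast
        then show "a \<in> upow X t" unfolding upow_def using sub_up by blast
      qed
    qed
  qed
next
  show "PI (upow X t) \<subseteq> (ideal_pow (PI X) t :: ('n,'k) mpoly set)"
  proof
    fix f :: "('n,'k) mpoly" assume fP: "f \<in> PI (upow X t)"
    show "f \<in> ideal_pow (PI X) t" unfolding ideal_pow_def
    proof (rule ideal_from_mons[OF ideal_gen_is_ideal])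
      fix a assume "a \<in> Poly_Mapping.keys f"
      then have "a \<in> upow X t" using fP by (auto simp: PI_def)
      then obtain g where g: "\<forall>i<t. g i \<in> X" "mdvd (\<Sum>i<t. g i) a"
        unfolding upow_def up_def psum_def by blast
      let ?s = "\<Sum>i<t. g i"
      have e: "(mon a :: ('n,'k) mpoly) = mon (a - ?s) * (\<Prod>i<t. mon (g i))"
        by (subst mdvd_ex[OF g(2)]) (simp add: mon_add mon_sum mult.commute)
      have "(\<Prod>i<t. mon (g i) :: ('n,'k) mpoly) \<in> {\<Prod>i<t. f i |f. \<forall>i<t. (f i :: ('n,'k) mpoly) \<in> PI X}"
        using g(1) by auto
      then have "(\<Prod>i<t. mon (g i) :: ('n,'k) mpoly) \<in> ideal_gen {\<Prod>i<t. f i |f. \<forall>i<t. (f i :: ('n,'k) mpoly) \<in> PI X}"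
        by (rule subsetD[OF ideal_gen_sub])
      then have "mon (a - ?s) * (\<Prod>i<t. mon (g i) :: ('n,'k) mpoly) \<in> ideal_gen {\<Prod>i<t. f i |f. \<forall>i<t. (f i :: ('n,'k) mpoly) \<in> PI X}"
        by (rule ideal_multl[OF ideal_gen_is_ideal])
      then show "(mon a :: ('n,'k) mpoly) \<in> ideal_gen {\<Prod>i<t. f i |f. \<forall>i<t. (f i :: ('n,'k) mpoly) \<in> PI X}"
        using e by metis
    qed
  qed
qed

definition deg :: "('n::finite \<Rightarrow>\<^sub>0 nat) \<Rightarrow> nat" where
  "deg a = (\<Sum>x\<in>UNIV. Poly_Mapping.lookup a x)"

lemma deg_less: "mdvd c a \<Longrightarrow> c \<noteq> a \<Longrightarrow> deg c < deg a"
proof -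
  assume m: "mdvd c a" and ne: "c \<noteq> a"
  have "\<exists>x\<in>UNIV. Poly_Mapping.lookup c x < Poly_Mapping.lookup a x"
  proof (rule ccontr)
    assume "\<not> ?thesis"
    then have "\<forall>x. Poly_Mapping.lookup c x = Poly_Mapping.lookup a x" using m unfolding mdvd_def by (meson UNIV_I antisym not_less)
    then show False using ne by (metis poly_mapping_eqI)
  qed
  then show ?thesis unfolding deg_def using m
    by (intro sum_strict_mono_ex1) (auto simp: mdvd_def)
qed

lemma exists_min:
  fixes a :: "'n::finite \<Rightarrow>\<^sub>0 nat"
  shows "a \<in> U \<Longrightarrow> \<exists>b. b \<in> U \<and> mdvd b a \<and> (\<forall>c\<in>U. mdvd c b \<longrightarrow> c = b)"
proof (induction "deg a" arbitrary: a rule: less_induct)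
  case less
  show ?case
  proof (cases "\<forall>c\<in>U. mdvd c a \<longrightarrow> c = a")
    case True then show ?thesis using less.prems by auto
  next
    case False
    then obtain c where c: "c \<in> U" "mdvd c a" "c \<noteq> a" by blast
    then obtain b where "b \<in> U \<and> mdvd b c \<and> (\<forall>d\<in>U. mdvd d b \<longrightarrow> d = b)"
      using less.hyps[OF deg_less[OF c(2,3)]] by blast
    then show ?thesis using c mdvd_trans by blast
  qed
qed

lemma deletion_PI:
  assumes "upclosed U"
  shows "(deletion (PI U) y :: ('n::finite,'k::field) mpoly set) = PI (up {a\<in>U. Poly_Mapping.lookup a y = 0})"
proof -
  have mg: "mingens (PI U :: ('n,'k) mpoly set) = {a\<in>U. \<forall>b\<in>U. mdvd b a \<longrightarrow> b = a}"
    unfolding mingens_def by auto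
  have "up {a \<in> mingens (PI U :: ('n,'k) mpoly set). Poly_Mapping.lookup a y = 0} = up {a\<in>U. Poly_Mapping.lookup a y = 0}"
  proof
    show "up {a \<in> mingens (PI U :: ('n,'k) mpoly set). Poly_Mapping.lookup a y = 0} \<subseteq> up {a\<in>U. Poly_Mapping.lookup a y = 0}"
      unfolding mg up_def by blast
  next
    show "up {a\<in>U. Poly_Mapping.lookup a y = 0} \<subseteq> up {a \<in> mingens (PI U :: ('n,'k) mpoly set). Poly_Mapping.lookup a y = 0}"
    proof
      fix a assume "a \<in> up {a\<in>U. Poly_Mapping.lookup a y = 0}"
      then obtain b where b: "b \<in> U" "Poly_Mapping.lookup b y = 0" "mdvd b a" unfolding up_def by blast
      obtain m where m: "m \<in> U" "mdvd m b" "\<forall>c\<in>U. mdvd c m \<longrightarrow> c = m" using exists_min[OF b(1)] by blast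
      have "Poly_Mapping.lookup m y = 0" using m(2) b(2) by (metis le_zero_eq mdvd_def)
      then show "a \<in> up {a \<in> mingens (PI U :: ('n,'k) mpoly set). Poly_Mapping.lookup a y = 0}"
        unfolding mg up_def using m b mdvd_trans by blast
    qed
  qed
  then show ?thesis unfolding deletion_def ideal_gen_mon by simp
qed

lemma var_mon: "var x = mon (Poly_Mapping.single x 1)" by (simp add: var_def)

lemma gen_var_W: "(ideal_gen (var ` A) :: ('n,'k::field) mpoly set) = PI (W A)"
proof -
  have "var ` A = (mon ` ((\<lambda>x. Poly_Mapping.single x 1) ` A) :: ('n,'k) mpoly set)"
    by (auto simp: var_mon)
  moreover have "up ((\<lambda>x. Poly_Mapping.single x 1) ` A) = W A"
    unfolding up_def W_def mdvd_def
  proof (safe)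
    fix a :: "'n \<Rightarrow>\<^sub>0 nat" and x assume "x \<in> A" "\<forall>i. Poly_Mapping.lookup (Poly_Mapping.single x 1) i \<le> Poly_Mapping.lookup a i"
    then have "1 \<le> Poly_Mapping.lookup a x" by (metis lookup_single_eq)
    then show "\<exists>x\<in>A. 0 < Poly_Mapping.lookup a x" using \<open>x \<in> A\<close> by (intro bexI[of _ x]) simp_all
  next
    fix a :: "'n \<Rightarrow>\<^sub>0 nat" and x assume "x \<in> A" "0 < Poly_Mapping.lookup a x"
    then show "\<exists>s\<in>(\<lambda>x. Poly_Mapping.single x 1) ` A. \<forall>i. Poly_Mapping.lookup s i \<le> Poly_Mapping.lookup a i"
      by (intro bexI[of _ "Poly_Mapping.single x 1"]) (auto simp: lookup_single when_def)
  qed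
  ultimately show ?thesis by (simp add: ideal_gen_mon)
qed

lemma del_W: "up {a \<in> W A. Poly_Mapping.lookup a y = 0} = W (A - {y})"
proof
  show "up {a \<in> W A. Poly_Mapping.lookup a y = 0} \<subseteq> W (A - {y})"
  proof
    fix a assume "a \<in> up {a \<in> W A. Poly_Mapping.lookup a y = 0}"
    then obtain b x where b: "x \<in> A" "0 < Poly_Mapping.lookup b x" "Poly_Mapping.lookup b y = 0"
      "\<forall>i. Poly_Mapping.lookup b i \<le> Poly_Mapping.lookup a i"
      unfolding up_def W_def mdvd_def by blast
    then have "x \<noteq> y" by auto
    moreover have "0 < Poly_Mapping.lookup a x" using b(2,4) less_le_trans by blast
    ultimately show "a \<in> W (A - {y})" using b(1) unfolding W_def by blast
  qed
next
  show "W (A - {y}) \<subseteq> up {a \<in> W A. Poly_Mapping.lookup a y = 0}"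
  proof
    fix a assume "a \<in> W (A - {y})"
    then obtain x where x: "x \<in> A" "x \<noteq> y" "0 < Poly_Mapping.lookup a x" unfolding W_def by auto
    have "Poly_Mapping.single x 1 \<in> {a \<in> W A. Poly_Mapping.lookup a y = 0}"
      using x by (auto simp: W_def lookup_single when_def)
    moreover have "mdvd (Poly_Mapping.single x 1) a" using x by (auto simp: mdvd_def lookup_single when_def)
    ultimately show "a \<in> up {a \<in> W A. Poly_Mapping.lookup a y = 0}" unfolding up_def by blast
  qed
qed


lemma witness:
  fixes f :: "('n::finite,'k::field) mpoly"
  assumes V: "upclosed V" and P: "PI (W A) = colon (PI V) f"
  shows "\<exists>m. (PI (W A) :: ('n,'k) mpoly set) = colon (PI V) (mon m)"
proof (rule ccontr)
  assume nex: "\<not> ?thesis"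
  have "(1 :: ('n,'k) mpoly) \<notin> PI (W A)" using mon_in_PI[of 0 "W A"] by (simp add: mon_zero W_def)
  have fnz: "f \<noteq> 0"
  proof
    assume "f = 0"
    then have "colon (PI V) f = (UNIV :: ('n,'k) mpoly set)" by (simp add: colon_def PI_def)
    then show False using P \<open>(1 :: ('n,'k) mpoly) \<notin> PI (W A)\<close> by simp
  qed
  have sub: "c + a \<in> V" if "a \<in> Poly_Mapping.keys f" "c \<in> W A" for a c
  proof -
    have "(mon c :: ('n,'k) mpoly) \<in> colon (PI V) f" using P that(2) by (metis mon_in_PI)
    then have "f * mon c \<in> PI V" by (simp add: colon_def mult.commute)
    then show ?thesis using that(1) by (auto simp: PI_def keys_mult_mon add.commute)
  qed
  have "\<exists>w. w + a \<in> V \<and> w \<notin> W A" if "a \<in> Poly_Mapping.keys f" for a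
  proof (rule ccontr)
    assume "\<not> ?thesis"
    then have "{c. c + a \<in> V} \<subseteq> W A" by blast
    moreover have "W A \<subseteq> {c. c + a \<in> V}" using sub[OF that] by blast
    ultimately have "PI (W A) = (colon (PI V) (mon a) :: ('n,'k) mpoly set)"
      by (simp add: colon_mon)
    then show False using nex by blast
  qed
  then obtain wf where wf: "\<And>a. a \<in> Poly_Mapping.keys f \<Longrightarrow> wf a + a \<in> V \<and> wf a \<notin> W A" by metis
  define w where "w = (\<Sum>a\<in>Poly_Mapping.keys f. wf a)"
  have "w \<notin> W A"
  proof
    assume "w \<in> W A"
    then obtain x where x: "x \<in> A" "0 < Poly_Mapping.lookup w x" unfolding W_def by blast
    have "\<forall>a\<in>Poly_Mapping.keys f. Poly_Mapping.lookup (wf a) x = 0" using wf x(1) unfolding W_def by auto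
    then have "Poly_Mapping.lookup w x = 0" unfolding w_def by (simp add: lookup_sum)
    then show False using x by simp
  qed
  moreover have "w + a \<in> V" if "a \<in> Poly_Mapping.keys f" for a
  proof -
    have "mdvd (wf a) w" unfolding mdvd_def w_def lookup_sum
      using that by (auto intro!: member_le_sum)
    then have "mdvd (wf a + a) (w + a)" by (auto simp: mdvd_def lookup_add)
    then show ?thesis using wf[OF that] V unfolding upclosed_def by blast
  qed
  then have "f * mon w \<in> PI V" by (auto simp: PI_def keys_mult_mon add.commute)
  then have "(mon w :: ('n,'k) mpoly) \<in> colon (PI V) f" by (simp add: colon_def mult.commute)
  then have "w \<in> W A" using P by (metis mon_in_PI)
  ultimately show False by blast
qed

lemma lookup_del: "Poly_Mapping.lookup (a - Poly_Mapping.single y (Poly_Mapping.lookup a y)) x =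
   (if x = y then 0 else Poly_Mapping.lookup a x)"
  by (simp add: lookup_minus lookup_single when_def)

lemma lookup_minus_single: "Poly_Mapping.lookup (a - Poly_Mapping.single y v) x =
   (if x = y then Poly_Mapping.lookup a y - v else Poly_Mapping.lookup a x)"
  by (simp add: lookup_minus lookup_single when_def)

lemma lookup_psum: "Poly_Mapping.lookup (\<Sum>i<t. g i) x = (\<Sum>i<t. Poly_Mapping.lookup (g i) x)"
  by (simp add: lookup_sum)

lemma key_set:
  assumes U: "upclosed U"
  shows "a \<in> upow (up {a\<in>U. Poly_Mapping.lookup a y = 0}) t \<longleftrightarrow>
         a - Poly_Mapping.single y (Poly_Mapping.lookup a y) \<in> upow U t"
  (is "?L \<longleftrightarrow> ?a0 \<in> _")
proof
  let ?D = "{a\<in>U. Poly_Mapping.lookup a y = 0}"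
  assume ?L
  then obtain g where g: "\<forall>i<t. g i \<in> up ?D" "mdvd (\<Sum>i<t. g i) a"
    unfolding upow_def up_def psum_def by blast
  then have "\<forall>i<t. \<exists>d. d \<in> ?D \<and> mdvd d (g i)" unfolding up_def by blast
  then obtain d where d: "\<And>i. i < t \<Longrightarrow> d i \<in> ?D \<and> mdvd (d i) (g i)" by metis
  have "mdvd (\<Sum>i<t. d i) ?a0"
    unfolding mdvd_def
  proof
    fix x
    show "Poly_Mapping.lookup (\<Sum>i<t. d i) x \<le> Poly_Mapping.lookup ?a0 x"
    proof (cases "x = y")
      case True
      then show ?thesis using d by (simp add: lookup_psum lookup_del)
    next
      case False
      have "(\<Sum>i<t. Poly_Mapping.lookup (d i) x) \<le> (\<Sum>i<t. Poly_Mapping.lookup (g i) x)"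
        using d by (intro sum_mono) (auto simp: mdvd_def)
      also have "\<dots> \<le> Poly_Mapping.lookup a x" using g(2) by (simp add: mdvd_def lookup_psum)
      finally show ?thesis using False by (simp add: lookup_psum lookup_del)
    qed
  qed
  moreover have "\<forall>i<t. d i \<in> U" using d by blast
  ultimately show "?a0 \<in> upow U t" unfolding upow_def up_def psum_def by blast
next
  let ?D = "{a\<in>U. Poly_Mapping.lookup a y = 0}"
  assume "?a0 \<in> upow U t"
  then obtain g where g: "\<forall>i<t. g i \<in> U" "mdvd (\<Sum>i<t. g i) ?a0"
    unfolding upow_def up_def psum_def by blast
  have gy: "Poly_Mapping.lookup (g i) y = 0" if "i < t" for i
  proof -
    have "Poly_Mapping.lookup (g i) y \<le> (\<Sum>i<t. Poly_Mapping.lookup (g i) y)"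
      using that by (intro member_le_sum) auto
    also have "\<dots> \<le> Poly_Mapping.lookup ?a0 y" using g(2) by (simp add: mdvd_def lookup_psum)
    finally show ?thesis by (simp add: lookup_del)
  qed
  have "\<forall>i<t. g i \<in> ?D" using g(1) gy by blast
  then have "\<forall>i<t. g i \<in> up ?D" by (meson subsetD sub_up)
  moreover have "mdvd ?a0 a" by (simp add: mdvd_def lookup_del)
  then have "mdvd (\<Sum>i<t. g i) a" using g(2) mdvd_trans by blast
  ultimately show ?L unfolding upow_def up_def psum_def by blast
qed

lemma mon_sum_set: "finite Y \<Longrightarrow> (mon (\<Sum>y\<in>Y. h y) :: ('n,'k::field) mpoly) = (\<Prod>y\<in>Y. mon (h y))"
  by (induction Y rule: finite_induct) (simp_all add: mon_zero mon_add)

theorem proposition2p1: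
  fixes I :: "('n::finite, 'k::field) mpoly set"
    and t :: nat and A Y :: "'n set"
  assumes "monomial_ideal I"
    and "t > 0"
    and "\<forall>y\<in>Y. deletion (ideal_gen (var ` A)) y \<notin> Ass (ideal_pow (deletion I y) t)"
  shows "ideal_gen (var ` A) \<in> Ass (ideal_pow I t) \<longleftrightarrow>
         ideal_gen (var ` A) \<in> Ass (colon (ideal_pow I t) (\<Prod>y\<in>Y. var y))"
proof -
  obtain S where IS: "I = ideal_gen (mon ` S)" using assms(1) unfolding monomial_ideal_def by blast
  define U where "U = up S"
  have U: "upclosed U" unfolding U_def by (rule upclosed_up)
  have IU: "I = PI U" unfolding IS U_def by (rule ideal_gen_mon)
  define J where "J = ideal_pow I t"
  have JU: "J = PI (upow U t)" unfolding J_def IU by (rule pow_PI)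
  have PW: "ideal_gen (var ` A) = (PI (W A) :: ('n,'k) mpoly set)" by (rule gen_var_W)
  define u :: "('n,'k) mpoly" where "u = (\<Prod>y\<in>Y. var y)"
  show ?thesis unfolding J_def[symmetric] u_def[symmetric]
  proof
    assume "ideal_gen (var ` A) \<in> Ass J"
    then obtain f where pr: "prime_ideal (PI (W A) :: ('n,'k) mpoly set)" and Pf: "PI (W A) = colon J f"
      unfolding Ass_def PW by blast
    obtain m where Pm: "(PI (W A) :: ('n,'k) mpoly set) = colon (PI (upow U t)) (mon m)"
      using witness[OF upclosed_up[of "psum U t", folded upow_def]] Pf JU by metis
    have setA: "{c. c + m \<in> upow U t} = W A"
      using Pm by (simp add: colon_mon) (metis PI_inj)
    have pos: "0 < Poly_Mapping.lookup m y" if yY: "y \<in> Y" for y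
    proof (rule ccontr)
      assume "\<not> 0 < Poly_Mapping.lookup m y"
      then have my: "Poly_Mapping.lookup m y = 0" by simp
      let ?D = "{a\<in>U. Poly_Mapping.lookup a y = 0}"
      have J': "ideal_pow (deletion I y) t = (PI (upow (up ?D) t) :: ('n,'k) mpoly set)"
        unfolding IU deletion_PI[OF U] by (rule pow_PI)
      have dP: "deletion (ideal_gen (var ` A)) y = (PI (W (A - {y})) :: ('n,'k) mpoly set)"
        unfolding PW deletion_PI[OF upclosed_W] del_W ..
      have "{c. c + m \<in> upow (up ?D) t} = W (A - {y})"
      proof (rule set_eqI)
        fix c
        have e: "c + m - Poly_Mapping.single y (Poly_Mapping.lookup (c + m) y)
                 = (c - Poly_Mapping.single y (Poly_Mapping.lookup c y)) + m"
          by (rule poly_mapping_eqI) (simp add: lookup_minus_single lookup_add my)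
        have "c \<in> {c. c + m \<in> upow (up ?D) t} \<longleftrightarrow> (c - Poly_Mapping.single y (Poly_Mapping.lookup c y)) + m \<in> upow U t"
          using key_set[OF U, of "c + m" y t] e by simp
        also have "\<dots> \<longleftrightarrow> c - Poly_Mapping.single y (Poly_Mapping.lookup c y) \<in> W A"
          using setA by blast
        also have "\<dots> \<longleftrightarrow> c \<in> W (A - {y})"
          unfolding W_def by (auto simp: lookup_del split: if_splits)
        finally show "c \<in> {c. c + m \<in> upow (up ?D) t} \<longleftrightarrow> c \<in> W (A - {y})" .
      qed
      then have "colon (ideal_pow (deletion I y) t) (mon m) = deletion (ideal_gen (var ` A)) y"
        unfolding J' dP colon_mon by simp
      then have "deletion (ideal_gen (var ` A)) y \<in> Ass (ideal_pow (deletion I y) t)"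
        unfolding Ass_def using prime_PI_W[of "A - {y}"] dP by (metis (mono_tags, lifting) mem_Collect_eq)
      then show False using assms(3) yY by blast
    qed
    have fY: "finite Y" by simp
    define uY where "uY = (\<Sum>y\<in>Y. Poly_Mapping.single y (1::nat))"
    have "mdvd uY m" unfolding mdvd_def uY_def
    proof
      fix x
      have "Poly_Mapping.lookup (\<Sum>y\<in>Y. Poly_Mapping.single y (1::nat)) x = (if x \<in> Y then 1 else 0)"
        by (simp add: lookup_sum lookup_single when_def)
      then show "Poly_Mapping.lookup (\<Sum>y\<in>Y. Poly_Mapping.single y (1::nat)) x \<le> Poly_Mapping.lookup m x"
        using pos by (simp add: Suc_leI)
    qed
    then have "(mon m :: ('n,'k) mpoly) = mon (m - uY) * mon uY"
      by (subst mdvd_ex, assumption) (simp add: mon_add mult.commute)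
    also have "mon uY = u" unfolding uY_def u_def using fY by (simp add: mon_sum_set var_mon)
    finally have "PI (W A) = colon (colon J u) (mon (m - uY))"
      using Pm JU by (simp add: colon_colon)
    then show "ideal_gen (var ` A) \<in> Ass (colon J u)" unfolding Ass_def PW using pr by blast
  next
    assume "ideal_gen (var ` A) \<in> Ass (colon J u)"
    then obtain f where "prime_ideal (ideal_gen (var ` A) :: ('n,'k) mpoly set)" "ideal_gen (var ` A) = colon (colon J u) f"
      unfolding Ass_def by blast
    then show "ideal_gen (var ` A) \<in> Ass J" unfolding Ass_def colon_colon by blast
  qed
qed

end
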